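(* In the hierarchical partition construction described in the context, with $|V|=n$, the number of distinct sets occurring in the partitions $\mathcal S_0,\mathcal S_1,\ldots$ is at most $2n-1$, and the number of unordered pairs $\{A,B\}$ of distinct such sets for which there is a level $j$ with $A,B\in\mathcal S_j$ and $A$ knows $B$ at level $j$ is at most $(2n-1)\lambda^{3+\eta}$.
   Context: Let $(V,d)$ be a finite metric space with $|V|=n\ge 2$ which is doubling with constant $\lambda$: for every $v\in V$ and $r>0$ the open ball $B_{2r}(v)=\{u:d(u,v)<2r\}$ is contained in the union of at most $\lambda$ open balls $B_r(w)$, $w\in V$. Fix an integer $\eta\ge2$ and a real $\tau$ with $1+\frac{1}{2^{\eta-1}-1}\le\tau\le 2^{\eta}$. For $L\subseteq V$ and $r>0$, a greedy partition of $L$ with parameter $r$ is obtained by: set $L_0=L$; while $L_i\ne\emptyset$ choose any $v_i\in L_i$, let $P_i=\{u\in L_i: d(u,v_i)<2^{-\eta-1}r\}$ with leader $v_i$, and set $L_{i+1}=L_i\setminus P_i$. Hierarchical partition construction: choose $r_0$ with $0<r_0<\min_{u\ne v}d(u,v)$ and put $r_j=\tau^j r_0$. Let $\mathcal S_0=\{\{v\}:v\in V\}$, the leader of $\{v\}$ being $v$. While $\mathcal S_j$ has more than one element: let $L_j$ be the set of leaders of the sets in $\mathcal S_j$, let $\mathcal S'_{j+1}$ be a greedy partition of $L_j$ with parameter $2r_{j+1}$, and let $\mathcal S_{j+1}$ consist, for each $P\in\mathcal S'_{j+1}$, of the set $\bigcup\{S\in\mathcal S_j:\mathrm{leader}(S)\in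 P\}$, whose leader is defined to be the leader of $P$. Each $\mathcal S_j$ is a partition of $V$. For $S,S'\in\mathcal S_j$, $S$ knows $S'$ (at level $j$) if there are $v\in S$, $u\in S'$ with $d(v,u)<r_j$. *)

theory Defs
  imports Complex_Main
begin

definition metric_on :: "'a set \<Rightarrow> ('a \<Rightarrow> 'a \<Rightarrow> real) \<Rightarrow> bool" where
  "metric_on V d \<longleftrightarrow>
     (\<forall>u\<in>V. \<forall>v\<in>V. d u v = 0 \<longleftrightarrow> u = v) \<and>
     (\<forall>u\<in>V. \<forall>v\<in>V. d u v = d v u) \<and>
     (\<forall>u\<in>V. \<forall>v\<in>V. \<forall>w\<in>V. d u w \<le> d u v + d v w)"

definition ball_on :: "'a set \<Rightarrow> ('a \<Rightarrow> 'a \<Rightarrow> real) \<Rightarrow> 'a \<Rightarrow> real \<Rightarrow> 'a set" where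
  "ball_on V d v r = {u \<in> V. d u v < r}"

definition doubling :: "'a set \<Rightarrow> ('a \<Rightarrow> 'a \<Rightarrow> real) \<Rightarrow> real \<Rightarrow> bool" where
  "doubling V d lam \<longleftrightarrow>
     (\<forall>v\<in>V. \<forall>r>0. \<exists>W. W \<subseteq> V \<and> real (card W) \<le> lam \<and>
        ball_on V d v (2*r) \<subseteq> (\<Union>w\<in>W. ball_on V d w r))"

text \<open>Greedy partition of L with parameter r: a list of (part, leader) pairs, produced by
  the greedy process (any choice of leaders).\<close>
inductive greedy_part :: "('a \<Rightarrow> 'a \<Rightarrow> real) \<Rightarrow> nat \<Rightarrow> real \<Rightarrow> 'a set \<Rightarrow> ('a set \<times> 'a) list \<Rightarrow> bool"
  for d :: "'a \<Rightarrow> 'a \<Rightarrow> real" and \<eta> :: nat and r :: real where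
  gp_Nil: "greedy_part d \<eta> r {} []"
| gp_Cons: "v \<in> L \<Longrightarrow> P = {u \<in> L. d u v < r / 2 ^ (\<eta> + 1)} \<Longrightarrow>
            greedy_part d \<eta> r (L - P) Ps \<Longrightarrow> greedy_part d \<eta> r L ((P, v) # Ps)"

text \<open>A run of the hierarchical partition construction. S j is the partition at level j,
  given as a set of (cluster, leader) pairs; m is the level where the while loop stops.
  r_j = tau^j * r0.\<close>
definition hier_run :: "('a \<Rightarrow> 'a \<Rightarrow> real) \<Rightarrow> nat \<Rightarrow> real \<Rightarrow> 'a set \<Rightarrow> real
    \<Rightarrow> (nat \<Rightarrow> ('a set \<times> 'a) set) \<Rightarrow> nat \<Rightarrow> bool" where
  "hier_run d \<eta> \<tau> V r0 S m \<longleftrightarrow>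
     S 0 = (\<lambda>v. ({v}, v)) ` V \<and>
     (\<forall>j<m. 1 < card (S j) \<and>
        (\<exists>Ps. greedy_part d \<eta> (2 * (\<tau> ^ Suc j * r0)) (snd ` S j) Ps \<and>
              S (Suc j) = (\<lambda>(P, v). (\<Union>{A. \<exists>l\<in>P. (A, l) \<in> S j}, v)) ` set Ps)) \<and>
     \<not> (1 < card (S m))"

definition knows :: "('a \<Rightarrow> 'a \<Rightarrow> real) \<Rightarrow> real \<Rightarrow> 'a set \<Rightarrow> 'a set \<Rightarrow> bool" where
  "knows d r A B \<longleftrightarrow> (\<exists>v\<in>A. \<exists>u\<in>B. d v u < r)"

end

theory Submission
  imports Defs
begin

lemma m_zero: "metric_on V d \<Longrightarrow> u \<in> V \<Longrightarrow> d u u = 0"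
  unfolding metric_on_def by blast
lemma m_sym: "metric_on V d \<Longrightarrow> u \<in> V \<Longrightarrow> v \<in> V \<Longrightarrow> d u v = d v u"
  unfolding metric_on_def by blast
lemma m_tri: "metric_on V d \<Longrightarrow> u \<in> V \<Longrightarrow> v \<in> V \<Longrightarrow> w \<in> V \<Longrightarrow> d u w \<le> d u v + d v w"
  unfolding metric_on_def by blast

lemma greedy_props:
  assumes "greedy_part d \<eta> r L Ps" "metric_on V d" "L \<subseteq> V" "0 < r"
  shows "\<Union>(fst ` set Ps) = L \<and>
    (\<forall>P v. (P,v)\<in>set Ps \<longrightarrow> v \<in> P \<and> P \<subseteq> L \<and> (\<forall>u\<in>P. d u v < r/2^(\<eta>+1))) \<and>
    (\<forall>P v P' v'. (P,v)\<in>set Ps \<longrightarrow> (P',v')\<in>set Ps \<longrightarrow> (P,v) \<noteq> (P',v') \<longrightarrow>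
        P \<inter> P' = {} \<and> r/2^(\<eta>+1) \<le> d v v')"
  using assms(1,3)
proof (induction rule: greedy_part.induct)
  case gp_Nil
  then show ?case by simp
next
  case (gp_Cons v L P Ps)
  have IH: "\<Union>(fst ` set Ps) = L - P \<and>
    (\<forall>Q w. (Q,w)\<in>set Ps \<longrightarrow> w \<in> Q \<and> Q \<subseteq> L - P \<and> (\<forall>u\<in>Q. d u w < r/2^(\<eta>+1))) \<and>
    (\<forall>Q w Q' w'. (Q,w)\<in>set Ps \<longrightarrow> (Q',w')\<in>set Ps \<longrightarrow> (Q,w) \<noteq> (Q',w') \<longrightarrow>
        Q \<inter> Q' = {} \<and> r/2^(\<eta>+1) \<le> d w w')"
    by (rule gp_Cons.IH) (use gp_Cons.prems in blast)
  have vV: "v \<in> V" using gp_Cons.hyps(1) gp_Cons.prems by blast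
  have r2: "0 < r/2^(\<eta>+1)" using assms(4) by simp
  have vP: "v \<in> P" using gp_Cons(1,2) m_zero[OF assms(2) vV] r2 by simp
  have PL: "P \<subseteq> L" using gp_Cons(2) by blast
  have Pd: "\<forall>u\<in>P. d u v < r/2^(\<eta>+1)" using gp_Cons(2) by blast
  have sep: "P \<inter> P' = {} \<and> r/2^(\<eta>+1) \<le> d v v' \<and> r/2^(\<eta>+1) \<le> d v' v" if "(P',v') \<in> set Ps" for P' v'
  proof -
    have "v' \<in> P'" "P' \<subseteq> L - P" using IH that by blast+
    then have "v' \<in> L" "v' \<notin> P" by blast+
    then have "\<not> d v' v < r/2^(\<eta>+1)" using gp_Cons(2) by blast
    moreover have "v' \<in> V" using \<open>v' \<in> L\<close> gp_Cons.prems by blast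
    ultimately show ?thesis using \<open>P' \<subseteq> L - P\<close> m_sym[OF assms(2) vV] by auto
  qed
  have c1: "\<Union>(fst ` set ((P, v) # Ps)) = L" using IH PL by auto
  have c2: "v1 \<in> P1 \<and> P1 \<subseteq> L \<and> (\<forall>u\<in>P1. d u v1 < r / 2 ^ (\<eta> + 1))"
    if "(P1, v1) \<in> set ((P, v) # Ps)" for P1 v1
  proof (cases "(P1,v1) = (P,v)")
    case True then show ?thesis using vP PL Pd by auto
  next
    case False then have "(P1,v1) \<in> set Ps" using that by auto
    then show ?thesis using IH by blast
  qed
  have c3: "P1 \<inter> P2 = {} \<and> r / 2 ^ (\<eta> + 1) \<le> d v1 v2"
    if a: "(P1, v1) \<in> set ((P, v) # Ps)" "(P2, v2) \<in> set ((P, v) # Ps)"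
      "(P1, v1) \<noteq> (P2, v2)" for P1 v1 P2 v2
    proof (cases "(P1,v1) = (P,v)")
      case True
      then have "(P2,v2) \<in> set Ps" using a by auto
      then show ?thesis using sep True by auto
    next
      case False
      then have 1: "(P1,v1) \<in> set Ps" using a by auto
      show ?thesis
      proof (cases "(P2,v2) = (P,v)")
        case True
        then show ?thesis using sep[OF 1] True by auto
      next
        case False
        then have "(P2,v2) \<in> set Ps" using a by auto
        then show ?thesis using IH 1 a(3) by blast
      qed
    qed
  show ?case
    apply (intro conjI)
      apply (rule c1)
     apply (intro allI impI)
     apply (erule c2)
    apply (intro allI impI)
    apply (rule c3)
      apply assumption+
    done
qed

locale hier =
  fixes V :: "'a set" and d :: "'a \<Rightarrow> 'a \<Rightarrow> real" and lam \<tau> r0 :: real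
    and \<eta> m :: nat and S :: "nat \<Rightarrow> ('a set \<times> 'a) set"
  assumes finV: "finite V" and Vne: "V \<noteq> {}"
    and met: "metric_on V d" and dbl: "doubling V d lam"
    and eta2: "\<eta> \<ge> 2"
    and tlo: "1 + 1 / (2 ^ (\<eta> - 1) - 1) \<le> \<tau>"
    and r0pos: "0 < r0" and sep0: "\<forall>u\<in>V. \<forall>v\<in>V. u \<noteq> v \<longrightarrow> r0 < d u v"
    and run: "hier_run d \<eta> \<tau> V r0 S m"
begin

lemma tau_gt1: "1 < \<tau>"
proof -
  have "(2::real) ^ 1 \<le> 2 ^ (\<eta> - 1)" by (rule power_increasing) (use eta2 in auto)
  then have "0 < 1 / ((2::real) ^ (\<eta> - 1) - 1)" by simp
  then show ?thesis using tlo by linarith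
qed

lemma key_core: "1/2 + \<tau>/2^\<eta> \<le> \<tau>/2"
proof -
  define h :: real where "h = 2 ^ (\<eta> - 1)"
  have h2: "2 \<le> h" unfolding h_def using power_increasing[of 1 "\<eta>-1" "2::real"] eta2 by auto
  have e: "(2::real)^\<eta> = 2 * h" unfolding h_def using eta2
    by (metis Suc_diff_1 less_le_trans pos2 power_Suc zero_less_numeral)
  have "1 + 1/(h-1) \<le> \<tau>" using tlo unfolding h_def .
  then have "(1 + 1/(h-1)) * (h-1) \<le> \<tau> * (h-1)" using h2 by (intro mult_right_mono) auto
  moreover have "(1 + 1/(h-1)) * (h-1) = h" using h2 by (simp add: field_simps)
  ultimately have "h \<le> \<tau> * h - \<tau>" by (simp add: algebra_simps)
  then show ?thesis unfolding e using h2 by (simp add: field_simps)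
qed

lemma key_ineq: "\<tau>^j*r0/2 + \<tau>^Suc j * r0/2^\<eta> \<le> \<tau>^Suc j * r0/2"
proof -
  have p: "0 < \<tau>^j*r0" using tau_gt1 r0pos by simp
  have "\<tau>^j*r0 * (1/2 + \<tau>/2^\<eta>) \<le> \<tau>^j*r0 * (\<tau>/2)"
    using key_core p by (intro mult_left_mono) auto
  then show ?thesis by (simp add: field_simps)
qed

definition "hinv j \<longleftrightarrow> finite (S j) \<and>
  (\<forall>A l. (A,l)\<in>S j \<longrightarrow> l\<in>A \<and> A \<subseteq> V \<and> (\<forall>x\<in>A. d x l \<le> \<tau>^j*r0/2)) \<and>
  (\<forall>A l A' l'. (A,l)\<in>S j \<longrightarrow> (A',l')\<in>S j \<longrightarrow> A\<inter>A' \<noteq> {} \<longrightarrow> A=A' \<and> l=l') \<and>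
  \<Union>(fst ` S j) = V \<and>
  (\<forall>A l A' l'. (A,l)\<in>S j \<longrightarrow> (A',l')\<in>S j \<longrightarrow> l\<noteq>l' \<longrightarrow> \<tau>^j*r0/2^\<eta> \<le> d l l')"

lemma S0: "S 0 = (\<lambda>v. ({v}, v)) ` V" using run unfolding hier_run_def by blast

lemma Sstep: "j < m \<Longrightarrow> \<exists>Ps. greedy_part d \<eta> (2 * (\<tau> ^ Suc j * r0)) (snd ` S j) Ps \<and>
              S (Suc j) = (\<lambda>(P, v). (\<Union>{A. \<exists>l\<in>P. (A, l) \<in> S j}, v)) ` set Ps"
  using run unfolding hier_run_def by blast

lemma inv0: "hinv 0"
proof -
  have "r0/2^\<eta> \<le> r0" using r0pos by (simp add: divide_le_eq)
  then show ?thesis unfolding hinv_def S0 using finV r0pos sep0 m_zero[OF met] by fastforce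
qed


lemma inv_step:
  assumes jm: "j < m" and I: "hinv j"
  shows "hinv (Suc j)"
proof -
  obtain Ps where gp: "greedy_part d \<eta> (2 * (\<tau> ^ Suc j * r0)) (snd ` S j) Ps"
    and SS: "S (Suc j) = (\<lambda>(P, v). (\<Union>{A. \<exists>l\<in>P. (A, l) \<in> S j}, v)) ` set Ps"
    using Sstep[OF jm] by blast
  have fin: "finite (S j)"
    and b: "\<And>A l. (A,l)\<in>S j \<Longrightarrow> l\<in>A \<and> A \<subseteq> V \<and> (\<forall>x\<in>A. d x l \<le> \<tau>^j*r0/2)"
    and c: "\<And>A l A' l'. (A,l)\<in>S j \<Longrightarrow> (A',l')\<in>S j \<Longrightarrow> A\<inter>A' \<noteq> {} \<Longrightarrow> A=A' \<and> l=l'"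
    and dd: "\<Union>(fst ` S j) = V"
    using I unfolding hinv_def by blast+
  have LV: "snd ` S j \<subseteq> V" using b by force
  have rpos: "0 < 2 * (\<tau> ^ Suc j * r0)" using tau_gt1 r0pos by simp
  have rho: "2 * (\<tau> ^ Suc j * r0) / 2^(\<eta>+1) = \<tau> ^ Suc j * r0 / 2^\<eta>" by simp
  note G = greedy_props[OF gp met LV rpos, unfolded rho]
  have G1: "\<Union>(fst ` set Ps) = snd ` S j" using G by blast
  have G2: "\<And>P v. (P,v)\<in>set Ps \<Longrightarrow> v \<in> P \<and> P \<subseteq> snd ` S j \<and> (\<forall>u\<in>P. d u v < \<tau> ^ Suc j * r0 / 2^\<eta>)"
    using G by blast
  have G3: "\<And>P v P' v'. (P,v)\<in>set Ps \<Longrightarrow> (P',v')\<in>set Ps \<Longrightarrow> (P,v) \<noteq> (P',v') \<Longrightarrow>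
        P \<inter> P' = {} \<and> \<tau> ^ Suc j * r0 / 2^\<eta> \<le> d v v'"
    using G by blast
  define F where "F = (\<lambda>P. \<Union>{A. \<exists>l\<in>P. (A, l) \<in> S j})"
  have SS': "S (Suc j) = (\<lambda>(P, v). (F P, v)) ` set Ps" using SS unfolding F_def by simp
  have mem: "\<exists>P. (P,v) \<in> set Ps \<and> B = F P" if "(B,v) \<in> S (Suc j)" for B v
    using that unfolding SS' by auto
  have pa: "finite (S (Suc j))" unfolding SS' by simp
  have pb: "l\<in>B \<and> B \<subseteq> V \<and> (\<forall>x\<in>B. d x l \<le> \<tau>^Suc j*r0/2)" if Bl: "(B,l)\<in>S (Suc j)" for B l
  proof -
    obtain P where P: "(P,l) \<in> set Ps" "B = F P" using mem[OF Bl] by blast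
    from G2[OF P(1)] obtain A where A: "(A,l) \<in> S j" by force
    have lB: "l \<in> B" using A b[OF A] G2[OF P(1)] unfolding P(2) F_def by blast
    have BV: "B \<subseteq> V" unfolding P(2) F_def using b by blast
    have "d x l \<le> \<tau>^Suc j*r0/2" if "x \<in> B" for x
    proof -
      obtain A' l' where A': "(A',l') \<in> S j" "l' \<in> P" "x \<in> A'" using \<open>x\<in>B\<close> unfolding P(2) F_def by blast
      have "x \<in> V" "l' \<in> V" "l \<in> V" using b[OF A'(1)] lB BV A'(3) by blast+
      then have "d x l \<le> d x l' + d l' l" using m_tri[OF met] by blast
      also have "\<dots> \<le> \<tau>^j*r0/2 + \<tau>^Suc j*r0/2^\<eta>"
        using b[OF A'(1)] A'(3) G2[OF P(1)] A'(2) by (intro add_mono) auto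
      also have "\<dots> \<le> \<tau>^Suc j*r0/2" by (rule key_ineq)
      finally show ?thesis .
    qed
    then show ?thesis using lB BV by blast
  qed
  have pc: "B=B' \<and> l=l'" if T: "(B,l)\<in>S (Suc j)" "(B',l')\<in>S (Suc j)" "B\<inter>B' \<noteq> {}" for B l B' l'
  proof -
    obtain P where P: "(P,l) \<in> set Ps" "B = F P" using mem[OF T(1)] by blast
    obtain P' where P': "(P',l') \<in> set Ps" "B' = F P'" using mem[OF T(2)] by blast
    show ?thesis
    proof (cases "(P,l) = (P',l')")
      case True then show ?thesis using P P' by simp
    next
      case False
      then have disj: "P \<inter> P' = {}" using G3[OF P(1) P'(1)] by blast
      obtain x where "x \<in> B" "x \<in> B'" using T(3) by blast
      then obtain A1 l1 A2 l2 where "(A1,l1)\<in>S j" "l1\<in>P" "x\<in>A1" "(A2,l2)\<in>S j" "l2\<in>P'" "x\<in>A2"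
        unfolding P(2) P'(2) F_def by blast
      then have "l1 = l2" using c by blast
      then show ?thesis using disj \<open>l1\<in>P\<close> \<open>l2\<in>P'\<close> by blast
    qed
  qed
  have pd: "\<Union>(fst ` S (Suc j)) = V"
  proof
    show "\<Union>(fst ` S (Suc j)) \<subseteq> V" using pb by force
  next
    show "V \<subseteq> \<Union>(fst ` S (Suc j))"
    proof
      fix x assume "x \<in> V"
      then obtain A l where Al: "(A,l) \<in> S j" "x \<in> A" using dd by force
      then have "l \<in> snd ` S j" by force
      then obtain P v where Pv: "(P,v) \<in> set Ps" "l \<in> P" using G1 by force
      then have "x \<in> F P" unfolding F_def using Al by blast
      moreover have "(F P, v) \<in> S (Suc j)" unfolding SS' using Pv by force
      ultimately show "x \<in> \<Union>(fst ` S (Suc j))" by force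
    qed
  qed
  have pe: "\<tau>^Suc j*r0/2^\<eta> \<le> d l l'" if T: "(B,l)\<in>S (Suc j)" "(B',l')\<in>S (Suc j)" "l\<noteq>l'" for B l B' l'
  proof -
    obtain P where P: "(P,l) \<in> set Ps" using mem[OF T(1)] by blast
    obtain P' where P': "(P',l') \<in> set Ps" using mem[OF T(2)] by blast
    show ?thesis using G3[OF P P'] T(3) by blast
  qed
  show ?thesis unfolding hinv_def using pa pb pc pd pe by blast
qed

lemma inv_all: "j \<le> m \<Longrightarrow> hinv j"
proof (induction j)
  case 0 then show ?case using inv0 by simp
next
  case (Suc j) then show ?case using inv_step by simp
qed


definition "C j = fst ` S j"

lemma hinvD:
  assumes "j \<le> m"
  shows "finite (S j)"
    and "\<And>A l. (A,l)\<in>S j \<Longrightarrow> l\<in>A \<and> A \<subseteq> V \<and> (\<forall>x\<in>A. d x l \<le> \<tau>^j*r0/2)"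
    and "\<And>A l A' l'. (A,l)\<in>S j \<Longrightarrow> (A',l')\<in>S j \<Longrightarrow> A\<inter>A' \<noteq> {} \<Longrightarrow> A=A' \<and> l=l'"
    and "\<Union>(fst ` S j) = V"
    and "\<And>A l A' l'. (A,l)\<in>S j \<Longrightarrow> (A',l')\<in>S j \<Longrightarrow> l\<noteq>l' \<Longrightarrow> \<tau>^j*r0/2^\<eta> \<le> d l l'"
  using inv_all[OF assms] unfolding hinv_def by blast+

lemma C_fin: "j \<le> m \<Longrightarrow> finite (C j)"
  using hinvD(1) unfolding C_def by blast

lemma C_lead: "A \<in> C j \<Longrightarrow> \<exists>l. (A,l) \<in> S j"
  unfolding C_def by force

lemma C_ne: assumes "j \<le> m" "A \<in> C j" shows "A \<noteq> {} \<and> A \<subseteq> V"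
proof -
  obtain l where "(A,l) \<in> S j" using C_lead[OF assms(2)] by blast
  from hinvD(2)[OF assms(1) this] show ?thesis by blast
qed

lemma C_disj: assumes "j \<le> m" "A \<in> C j" "A' \<in> C j" "A \<inter> A' \<noteq> {}" shows "A = A'"
proof -
  obtain l where l: "(A,l) \<in> S j" using C_lead[OF assms(2)] by blast
  obtain l' where l': "(A',l') \<in> S j" using C_lead[OF assms(3)] by blast
  from hinvD(3)[OF assms(1) l l' assms(4)] show ?thesis by blast
qed

lemma C_union: "j \<le> m \<Longrightarrow> \<Union>(C j) = V"
  using hinvD(4) unfolding C_def by blast

lemma C_step: assumes "j < m" "Y \<in> C (Suc j)" "x \<in> Y" shows "\<exists>A\<in>C j. x \<in> A \<and> A \<subseteq> Y"
proof -
  obtain Ps where SS: "S (Suc j) = (\<lambda>(P, v). (\<Union>{A. \<exists>l\<in>P. (A, l) \<in> S j}, v)) ` set Ps"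
    using Sstep[OF assms(1)] by blast
  obtain P where "Y = \<Union>{A. \<exists>l\<in>P. (A, l) \<in> S j}" using assms(2) unfolding C_def SS by force
  then show ?thesis using assms(3) unfolding C_def by force
qed

lemma C_refine1: assumes "j < m" "A \<in> C j" shows "\<exists>Y\<in>C (Suc j). A \<subseteq> Y"
proof -
  obtain x where x: "x \<in> A" using C_ne[OF _ assms(2)] assms(1) by fastforce
  then have "x \<in> V" using C_ne[OF _ assms(2)] assms(1) by auto
  then obtain Y where Y: "Y \<in> C (Suc j)" "x \<in> Y" using C_union[of "Suc j"] assms(1) by auto
  then obtain A' where A': "A' \<in> C j" "x \<in> A'" "A' \<subseteq> Y" using C_step assms(1) by blast
  then have "A' = A" using C_disj[OF _ A'(1) assms(2)] x assms(1) by auto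
  then show ?thesis using Y A' by blast
qed

lemma C_refine: assumes "j \<le> i" "i \<le> m" "A \<in> C j" shows "\<exists>Y\<in>C i. A \<subseteq> Y"
  using assms(1,2)
proof (induction i rule: dec_induct)
  case base then show ?case using assms(3) by blast
next
  case (step i)
  then obtain Y where "Y \<in> C i" "A \<subseteq> Y" by auto
  moreover from C_refine1[OF _ this(1)] step obtain Z where "Z \<in> C (Suc i)" "Y \<subseteq> Z" by auto
  ultimately show ?case by blast
qed

lemma C_interval: assumes "j \<le> k" "k \<le> i" "i \<le> m" "A \<in> C j" "A \<in> C i" shows "A \<in> C k"
proof -
  obtain Y where Y: "Y \<in> C k" "A \<subseteq> Y" using C_refine[OF assms(1) _ assms(4)] assms by auto
  obtain Z where Z: "Z \<in> C i" "Y \<subseteq> Z" using C_refine[OF assms(2) assms(3) Y(1)] by auto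
  have "j \<le> m" using assms by linarith
  then have "A \<noteq> {}" using C_ne assms(4) by blast
  then have "A \<inter> Z \<noteq> {}" using Y Z by blast
  then have "A = Z" using C_disj[OF assms(3) assms(5) Z(1)] by blast
  then show ?thesis using Y Z by auto
qed

lemma count_step: assumes jm: "j < m"
  shows "card (C (Suc j)) + card (C (Suc j) - C j) \<le> card (C j)"
proof -
  define C' where "C' = C (Suc j)"
  define g where "g Y = {A \<in> C j. A \<subseteq> Y}" for Y
  have fC: "finite (C j)" "finite C'" using C_fin jm unfolding C'_def by auto
  have gne: "card (g Y) \<ge> 1" if YC: "Y \<in> C'" for Y
  proof -
    obtain x where "x \<in> Y" using C_ne[of "Suc j" Y] jm YC unfolding C'_def by auto
    then obtain A where "A \<in> C j" "A \<subseteq> Y" using C_step jm YC unfolding C'_def by blast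
    then have "g Y \<noteq> {}" unfolding g_def by blast
    moreover have "finite (g Y)" using fC unfolding g_def by auto
    ultimately show ?thesis by (simp add: Suc_le_eq card_gt_0_iff)
  qed
  have gnew: "card (g Y) \<ge> 2" if YC: "Y \<in> C' - C j" for Y
  proof (rule ccontr)
    assume "\<not> card (g Y) \<ge> 2"
    with gne YC have "card (g Y) = 1" by fastforce
    then obtain A where gA: "g Y = {A}" using card_1_singletonE by blast
    have "Y = A"
    proof
      show "A \<subseteq> Y" using gA unfolding g_def by blast
      show "Y \<subseteq> A"
      proof
        fix x assume "x \<in> Y"
        then obtain A' where "A' \<in> C j" "x \<in> A'" "A' \<subseteq> Y" using C_step jm YC unfolding C'_def by blast
        then have "A' \<in> g Y" unfolding g_def by blast
        then show "x \<in> A" using gA \<open>x \<in> A'\<close> by blast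
      qed
    qed
    moreover have "A \<in> C j" using gA unfolding g_def by blast
    ultimately show False using YC by blast
  qed
  have disj: "\<forall>Y\<in>C'. \<forall>Y'\<in>C'. Y \<noteq> Y' \<longrightarrow> g Y \<inter> g Y' = {}"
  proof (intro ballI impI)
    fix Y Y' assume YY: "Y \<in> C'" "Y' \<in> C'" "Y \<noteq> Y'"
    show "g Y \<inter> g Y' = {}"
    proof (rule ccontr)
      assume "g Y \<inter> g Y' \<noteq> {}"
      then obtain A where "A \<in> C j" "A \<subseteq> Y" "A \<subseteq> Y'" unfolding g_def by blast
      moreover have "A \<noteq> {}" using C_ne[OF less_imp_le[OF jm] \<open>A \<in> C j\<close>] by blast
      ultimately have "Y \<inter> Y' \<noteq> {}" by blast
      then show False using C_disj[of "Suc j" Y Y'] YY jm unfolding C'_def by auto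
    qed
  qed
  have "card (\<Union>(g ` C')) = (\<Sum>Y\<in>C'. card (g Y))"
    by (rule card_UN_disjoint) (use fC disj in \<open>auto simp: g_def\<close>)
  moreover have "card (\<Union>(g ` C')) \<le> card (C j)"
    by (rule card_mono) (use fC in \<open>auto simp: g_def\<close>)
  moreover have "(\<Sum>Y\<in>C'. card (g Y)) = (\<Sum>Y\<in>C' \<inter> C j. card (g Y)) + (\<Sum>Y\<in>C' - C j. card (g Y))"
    using sum.Int_Diff[OF fC(2)] by blast
  moreover have "(\<Sum>Y\<in>C' \<inter> C j. card (g Y)) \<ge> (\<Sum>Y\<in>C' \<inter> C j. 1)"
    by (rule sum_mono) (use gne in auto)
  moreover have "(\<Sum>Y\<in>C' - C j. card (g Y)) \<ge> (\<Sum>Y\<in>C' - C j. 2)"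
    by (rule sum_mono) (use gnew in auto)
  moreover have "card C' = card (C' \<inter> C j) + card (C' - C j)" using card_Int_Diff[OF fC(2)] by blast
  ultimately show ?thesis unfolding C'_def[symmetric] by simp
qed

definition "U k = (\<Union>j\<in>{..k}. C j)"

lemma U_bound: "k \<le> m \<Longrightarrow> card (U k) + card (C k) \<le> 2 * card V"
proof (induction k)
  case 0
  have "C 0 = (\<lambda>v. {v}) ` V" unfolding C_def S0 by force
  then have "card (C 0) = card V" by (simp add: card_image)
  then show ?case unfolding U_def by simp
next
  case (Suc k)
  have km: "k < m" using Suc by simp
  have "U (Suc k) = U k \<union> (C (Suc k) - C k)" unfolding U_def by (auto simp: le_Suc_eq)
  moreover have "finite (U k)" unfolding U_def using C_fin km by auto
  moreover have "finite (C (Suc k))" using C_fin Suc by auto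
  ultimately have "card (U (Suc k)) \<le> card (U k) + card (C (Suc k) - C k)"
    by (simp add: card_Un_le)
  then show ?case using count_step[OF km] Suc by simp
qed

lemma part1: "card (U m) \<le> 2 * card V - 1"
proof -
  have "C m \<noteq> {}" using C_union[of m] Vne by auto
  then have "card (C m) \<ge> 1" using C_fin[of m] by (simp add: Suc_le_eq card_gt_0_iff)
  then show ?thesis using U_bound[of m] by simp
qed


lemma lam_ge1: "1 \<le> lam"
proof -
  obtain v where v: "v \<in> V" using Vne by blast
  obtain W where W: "W \<subseteq> V" "real (card W) \<le> lam" "ball_on V d v (2*1) \<subseteq> (\<Union>w\<in>W. ball_on V d w 1)"
    using dbl v unfolding doubling_def by (meson zero_less_one)
  have "v \<in> ball_on V d v (2*1)" using v m_zero[OF met v] unfolding ball_on_def by simp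
  then have "W \<noteq> {}" using W(3) by blast
  moreover have "finite W" using W(1) finV finite_subset by blast
  ultimately have "card W \<ge> 1" by (simp add: Suc_le_eq card_gt_0_iff)
  then show ?thesis using W(2) by linarith
qed

lemma cover: "a \<in> V \<Longrightarrow> 0 < \<rho> \<Longrightarrow> \<exists>W\<subseteq>V. real (card W) \<le> lam^k \<and>
   ball_on V d a (2^k*\<rho>) \<subseteq> (\<Union>w\<in>W. ball_on V d w \<rho>)"
proof (induction k arbitrary: \<rho>)
  case 0
  then show ?case by (intro exI[of _ "{a}"]) auto
next
  case (Suc k)
  obtain W where W: "W \<subseteq> V" "real (card W) \<le> lam^k"
     "ball_on V d a (2^k*(2*\<rho>)) \<subseteq> (\<Union>w\<in>W. ball_on V d w (2*\<rho>))"
    using Suc.IH[of "2*\<rho>"] Suc.prems by auto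
  have "\<forall>w\<in>W. \<exists>X. X \<subseteq> V \<and> real (card X) \<le> lam \<and>
        ball_on V d w (2*\<rho>) \<subseteq> (\<Union>x\<in>X. ball_on V d x \<rho>)"
    using dbl W(1) Suc.prems unfolding doubling_def by blast
  then obtain f where f: "\<And>w. w\<in>W \<Longrightarrow> f w \<subseteq> V \<and> real (card (f w)) \<le> lam \<and>
        ball_on V d w (2*\<rho>) \<subseteq> (\<Union>x\<in>f w. ball_on V d x \<rho>)"
    by metis
  have fW: "finite W" using W(1) finV finite_subset by blast
  have "real (card (\<Union>w\<in>W. f w)) \<le> real (\<Sum>w\<in>W. card (f w))"
    using card_UN_le[OF fW, of f] by linarith
  also have "\<dots> = (\<Sum>w\<in>W. real (card (f w)))" by simp
  also have "\<dots> \<le> (\<Sum>w\<in>W. lam)" by (rule sum_mono) (use f in auto)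
  also have "\<dots> = real (card W) * lam" by simp
  also have "\<dots> \<le> lam^k * lam" using W(2) lam_ge1 by (intro mult_right_mono) auto
  finally have c: "real (card (\<Union>w\<in>W. f w)) \<le> lam ^ Suc k" by (simp add: mult.commute)
  have "ball_on V d a (2^Suc k*\<rho>) \<subseteq> (\<Union>x\<in>(\<Union>w\<in>W. f w). ball_on V d x \<rho>)"
  proof
    fix x assume x: "x \<in> ball_on V d a (2^Suc k*\<rho>)"
    have "2^Suc k*\<rho> = 2^k*(2*\<rho>)" by simp
    then have "x \<in> ball_on V d a (2^k*(2*\<rho>))" using x by metis
    then obtain w where w: "w \<in> W" "x \<in> ball_on V d w (2*\<rho>)" using W(3) by blast
    then obtain y where "y \<in> f w" "x \<in> ball_on V d y \<rho>" using f[OF w(1)] by blast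
    then show "x \<in> (\<Union>x\<in>(\<Union>w\<in>W. f w). ball_on V d x \<rho>)" using w(1) by blast
  qed
  moreover have "(\<Union>w\<in>W. f w) \<subseteq> V" using f by blast
  ultimately show ?case using c by blast
qed

lemma packing:
  assumes a: "a \<in> V" and rho: "0 < \<rho>" and Q: "Q \<subseteq> ball_on V d a (2^k*\<rho>)"
    and sep: "\<forall>q\<in>Q. \<forall>q'\<in>Q. q \<noteq> q' \<longrightarrow> 2*\<rho> \<le> d q q'"
  shows "real (card Q) \<le> lam^k"
proof -
  obtain W where W: "W \<subseteq> V" "real (card W) \<le> lam^k" "ball_on V d a (2^k*\<rho>) \<subseteq> (\<Union>w\<in>W. ball_on V d w \<rho>)"
    using cover[OF a rho, of k] by (elim exE conjE) (intro that)
  have fW: "finite W" using W(1) finV finite_subset by blast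
  have one: "card (Q \<inter> ball_on V d w \<rho>) \<le> 1" if "w \<in> W" for w
  proof -
    have "x = y" if "x \<in> Q \<inter> ball_on V d w \<rho>" "y \<in> Q \<inter> ball_on V d w \<rho>" for x y
    proof (rule ccontr)
      assume "x \<noteq> y"
      then have "2*\<rho> \<le> d x y" using sep that by blast
      moreover have "x \<in> V" "y \<in> V" "w \<in> V" "d x w < \<rho>" "d y w < \<rho>"
        using that \<open>w \<in> W\<close> W(1) unfolding ball_on_def by auto
      moreover have "d x y \<le> d x w + d w y" using m_tri[OF met] calculation by blast
      moreover have "d w y = d y w" using m_sym[OF met] calculation by blast
      ultimately show False by linarith
    qed
    then have all: "\<forall>a1 \<in> Q \<inter> ball_on V d w \<rho>. \<forall>a2 \<in> Q \<inter> ball_on V d w \<rho>. a1 = a2" by blast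
    have "Q \<inter> ball_on V d w \<rho> \<subseteq> V" unfolding ball_on_def by blast
    then have fin: "finite (Q \<inter> ball_on V d w \<rho>)" using finV finite_subset by blast
    have "card (Q \<inter> ball_on V d w \<rho>) \<le> Suc 0" using card_le_Suc0_iff_eq[OF fin] all by blast
    then show ?thesis by simp
  qed
  have "Q \<subseteq> (\<Union>w\<in>W. Q \<inter> ball_on V d w \<rho>)" using Q W(3) by blast
  moreover have "(\<Union>w\<in>W. Q \<inter> ball_on V d w \<rho>) \<subseteq> V" unfolding ball_on_def by blast
  then have "finite (\<Union>w\<in>W. Q \<inter> ball_on V d w \<rho>)" using finV finite_subset by blast
  ultimately have "card Q \<le> card (\<Union>w\<in>W. Q \<inter> ball_on V d w \<rho>)"
    by (intro card_mono)
  also have "\<dots> \<le> (\<Sum>w\<in>W. card (Q \<inter> ball_on V d w \<rho>))" by (rule card_UN_le[OF fW])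
  also have "\<dots> \<le> (\<Sum>w\<in>W. 1)" by (rule sum_mono) (rule one)
  also have "\<dots> = card W" by simp
  finally show ?thesis using W(2) by linarith
qed


lemma knows_sym: "knows d r A B \<Longrightarrow> A \<subseteq> V \<Longrightarrow> B \<subseteq> V \<Longrightarrow> knows d r B A"
  unfolding knows_def using m_sym[OF met] by (metis subsetD)

lemma knows_mono: "r \<le> r' \<Longrightarrow> knows d r A B \<Longrightarrow> knows d r' A B"
  unfolding knows_def by force

lemma rad_mono: "j \<le> t \<Longrightarrow> \<tau>^j*r0 \<le> \<tau>^t*r0"
  using tau_gt1 r0pos by (intro mult_right_mono power_increasing) auto

lemma nbr_bound:
  assumes tm: "t \<le> m" and A: "A \<in> C t"
  shows "real (card {B\<in>C t. B \<noteq> A \<and> knows d (\<tau>^t*r0) A B}) \<le> lam^(\<eta>+2)"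
proof -
  define r where "r = \<tau>^t*r0"
  have rpos: "0 < r" unfolding r_def using tau_gt1 r0pos by simp
  have b: "\<And>A l. (A,l)\<in>S t \<Longrightarrow> l\<in>A \<and> A \<subseteq> V \<and> (\<forall>x\<in>A. d x l \<le> r/2)"
    using hinvD(2)[OF tm] unfolding r_def by blast
  have e: "\<And>A l A' l'. (A,l)\<in>S t \<Longrightarrow> (A',l')\<in>S t \<Longrightarrow> l\<noteq>l' \<Longrightarrow> r/2^\<eta> \<le> d l l'"
    using hinvD(5)[OF tm] unfolding r_def by blast
  define K where "K = {B\<in>C t. B \<noteq> A \<and> knows d r A B}"
  define lead where "lead B = (SOME b. (B,b) \<in> S t)" for B
  have lead: "(B, lead B) \<in> S t" if "B \<in> C t" for B
    unfolding lead_def using C_lead[OF that] by (rule someI_ex)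
  obtain a where a: "(A,a) \<in> S t" using C_lead[OF A] by blast
  have aV: "a \<in> V" using b[OF a] by blast
  have inj: "inj_on lead K"
  proof
    fix B B' assume BB: "B \<in> K" "B' \<in> K" "lead B = lead B'"
    then have "lead B \<in> B" "lead B \<in> B'" using b lead unfolding K_def by (metis (mono_tags, lifting) mem_Collect_eq)+
    then show "B = B'" using C_disj[OF tm] BB unfolding K_def by blast
  qed
  define \<rho> where "\<rho> = r / 2^(\<eta>+1)"
  have rho: "0 < \<rho>" unfolding \<rho>_def using rpos by simp
  have Qball: "lead ` K \<subseteq> ball_on V d a (2^(\<eta>+2)*\<rho>)"
  proof
    fix q assume "q \<in> lead ` K"
    then obtain B where B: "B \<in> K" "q = lead B" by blast
    have Bl: "(B, q) \<in> S t" using lead B unfolding K_def by blast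
    obtain v u where vu: "v \<in> A" "u \<in> B" "d v u < r" using B(1) unfolding K_def knows_def by blast
    have V4: "q \<in> V" "u \<in> V" "v \<in> V" using b[OF Bl] b[OF a] vu by blast+
    have "d q a \<le> d q u + d u a" using m_tri[OF met] V4 aV by blast
    also have "\<dots> \<le> d q u + (d u v + d v a)" using m_tri[OF met] V4 aV by simp
    also have "d q u = d u q" using m_sym[OF met] V4 by blast
    also have "d u v = d v u" using m_sym[OF met] V4 by blast
    finally have "d q a < 2 * r" using b[OF Bl] b[OF a] vu by fastforce
    moreover have "2^(\<eta>+2)*\<rho> = 2*r" unfolding \<rho>_def by (simp add: power_add)
    ultimately have "d q a < 2^(\<eta>+2)*\<rho>" by linarith
    then show "q \<in> ball_on V d a (2^(\<eta>+2)*\<rho>)" unfolding ball_on_def using V4 by blast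
  qed
  have Qsep: "\<forall>q\<in>lead ` K. \<forall>q'\<in>lead ` K. q \<noteq> q' \<longrightarrow> 2*\<rho> \<le> d q q'"
  proof (intro ballI impI)
    fix q q' assume "q \<in> lead ` K" "q' \<in> lead ` K" "q \<noteq> q'"
    moreover have "2*\<rho> = r/2^\<eta>" unfolding \<rho>_def by simp
    ultimately show "2*\<rho> \<le> d q q'" using e lead unfolding K_def by force
  qed
  have "real (card (lead ` K)) \<le> lam^(\<eta>+2)" by (rule packing[OF aV rho Qball Qsep])
  then show ?thesis using card_image[OF inj] unfolding K_def r_def by simp
qed

definition "eA A = Max {j. j \<le> m \<and> A \<in> C j}"

lemma eA: assumes "j \<le> m" "A \<in> C j"
  shows "eA A \<le> m" "A \<in> C (eA A)" "j \<le> eA A"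
proof -
  have f: "finite {j. j \<le> m \<and> A \<in> C j}" by simp
  have ne: "j \<in> {j. j \<le> m \<and> A \<in> C j}" using assms by simp
  have "eA A \<in> {j. j \<le> m \<and> A \<in> C j}" unfolding eA_def using Max_in[OF f] ne by blast
  then show "eA A \<le> m" "A \<in> C (eA A)" by auto
  show "j \<le> eA A" unfolding eA_def using Max_ge[OF f ne] .
qed

lemma part2:
  "real (card {{A, B} | A B. A \<noteq> B \<and>
             (\<exists>j\<le>m. A \<in> C j \<and> B \<in> C j \<and> knows d (\<tau> ^ j * r0) A B)})
    \<le> real (card (U m)) * lam ^ (\<eta>+2)"
proof -
  define K where "K A = {B\<in>C (eA A). B \<noteq> A \<and> knows d (\<tau>^(eA A)*r0) A B}" for A
  define P where "P = {{A, B} | A B. A \<noteq> B \<and>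
             (\<exists>j\<le>m. A \<in> C j \<and> B \<in> C j \<and> knows d (\<tau> ^ j * r0) A B)}"
  have fU: "finite (U m)" unfolding U_def using C_fin by auto
  have sub: "P \<subseteq> (\<Union>A\<in>U m. (\<lambda>B. {A,B}) ` K A)"
  proof
    fix p assume "p \<in> P"
    then obtain A B j where p: "p = {A,B}" "A \<noteq> B" "j \<le> m" "A \<in> C j" "B \<in> C j"
      "knows d (\<tau> ^ j * r0) A B" unfolding P_def by blast
    have AU: "A \<in> U m" "B \<in> U m" unfolding U_def using p by auto
    have AV: "A \<subseteq> V" "B \<subseteq> V" using C_ne[OF p(3) p(4)] C_ne[OF p(3) p(5)] by auto
    note ea = eA[OF p(3) p(4)] and eb = eA[OF p(3) p(5)]
    show "p \<in> (\<Union>A\<in>U m. (\<lambda>B. {A,B}) ` K A)"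
    proof (cases "eA A \<le> eA B")
      case True
      have "B \<in> C (eA A)" using C_interval[OF ea(3) True eb(1) p(5) eb(2)] .
      moreover have "knows d (\<tau>^(eA A)*r0) A B" using knows_mono[OF rad_mono[OF ea(3)] p(6)] .
      ultimately have "B \<in> K A" unfolding K_def using p(2) by auto
      then show ?thesis using AU p(1) by blast
    next
      case False
      then have le: "eA B \<le> eA A" by simp
      have "A \<in> C (eA B)" using C_interval[OF eb(3) le ea(1) p(4) ea(2)] .
      moreover have "knows d (\<tau>^(eA B)*r0) B A"
        using knows_sym[OF knows_mono[OF rad_mono[OF eb(3)] p(6)] AV] .
      ultimately have "A \<in> K B" unfolding K_def using p(2) by auto
      moreover have "p = {B, A}" using p(1) by blast
      ultimately show ?thesis using AU by blast
    qed
  qed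
  have fin2: "finite (\<Union>A\<in>U m. (\<lambda>B. {A,B}) ` K A)"
    using fU C_fin eA unfolding K_def U_def by auto
  have "card P \<le> card (\<Union>A\<in>U m. (\<lambda>B. {A,B}) ` K A)" by (rule card_mono[OF fin2 sub])
  also have "\<dots> \<le> (\<Sum>A\<in>U m. card ((\<lambda>B. {A,B}) ` K A))" by (rule card_UN_le[OF fU])
  also have "\<dots> \<le> (\<Sum>A\<in>U m. card (K A))"
  proof (rule sum_mono)
    fix A assume "A \<in> U m"
    then obtain j where "j \<le> m" "A \<in> C j" unfolding U_def by auto
    then have "finite (K A)" using C_fin eA unfolding K_def by auto
    then show "card ((\<lambda>B. {A,B}) ` K A) \<le> card (K A)" by (rule card_image_le)
  qed
  finally have "real (card P) \<le> (\<Sum>A\<in>U m. real (card (K A)))" by (metis of_nat_le_iff of_nat_sum)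
  also have "\<dots> \<le> (\<Sum>A\<in>U m. lam^(\<eta>+2))"
  proof (rule sum_mono)
    fix A assume "A \<in> U m"
    then obtain j where "j \<le> m" "A \<in> C j" unfolding U_def by auto
    then show "real (card (K A)) \<le> lam^(\<eta>+2)" unfolding K_def using nbr_bound eA by blast
  qed
  also have "\<dots> = real (card (U m)) * lam ^ (\<eta>+2)" by simp
  finally show ?thesis unfolding P_def .
qed

end


theorem corollary1:
  fixes V :: "'a set" and d :: "'a \<Rightarrow> 'a \<Rightarrow> real" and lam \<tau> r0 :: real
    and \<eta> n m :: nat and S :: "nat \<Rightarrow> ('a set \<times> 'a) set"
  assumes "finite V" and "card V = n" and "n \<ge> 2"
    and "metric_on V d" and "doubling V d lam"
    and "\<eta> \<ge> 2"
    and "1 + 1 / (2 ^ (\<eta> - 1) - 1) \<le> \<tau>" and "\<tau> \<le> 2 ^ \<eta>"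
    and "0 < r0" and "\<forall>u\<in>V. \<forall>v\<in>V. u \<noteq> v \<longrightarrow> r0 < d u v"
    and "hier_run d \<eta> \<tau> V r0 S m"
  shows "card {A. \<exists>j\<le>m. A \<in> fst ` S j} \<le> 2 * n - 1 \<and>
         real (card {{A, B} | A B. A \<noteq> B \<and>
             (\<exists>j\<le>m. A \<in> fst ` S j \<and> B \<in> fst ` S j \<and> knows d (\<tau> ^ j * r0) A B)})
           \<le> real (2 * n - 1) * lam ^ (3 + \<eta>)"
proof -
  have Vne: "V \<noteq> {}" using assms(2,3) by auto
  interpret H: hier V d lam \<tau> r0 \<eta> m S
    using assms Vne by unfold_locales auto
  have U: "{A. \<exists>j\<le>m. A \<in> fst ` S j} = H.U m" unfolding H.U_def H.C_def by auto
  have p1: "card (H.U m) \<le> 2 * n - 1" using H.part1 assms(2) by simp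
  have "real (card (H.U m)) * lam ^ (\<eta>+2) \<le> real (2 * n - 1) * lam ^ (\<eta>+2)"
    using p1 H.lam_ge1 by (intro mult_right_mono) auto
  also have "\<dots> \<le> real (2 * n - 1) * lam ^ (3+\<eta>)"
    using H.lam_ge1 by (intro mult_left_mono power_increasing) auto
  finally have cc: "real (card (H.U m)) * lam ^ (\<eta>+2) \<le> real (2 * n - 1) * lam ^ (3+\<eta>)" .
  note P2 = H.part2[unfolded H.C_def]
  show ?thesis
    apply (rule conjI)
     apply (simp only: U)
     apply (rule p1)
    using P2 cc by linarith
qed

end
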